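(* Let $\Phi=\forall u_1\ldots\forall u_n\exists e_1(D_1)\ldots\exists e_m(D_m).\varphi$ be a DQBF with prefix $\mathcal{Q}$, let $A$ be a set of arbiter variables, let $\psi$ be a CNF with $\mathit{var}(\psi)\subseteq U\cup E\cup A$, let $\Psi=\mathcal{Q}\exists A(\emptyset).\psi$, let $\neg p\vee\ell$ be a forcing clause in $\psi$, and let $\Psi'=\mathcal{Q}\exists A(\emptyset).\psi\wedge(\neg p\vee\ell)$. Then $F$ is a model of $\Psi$ if and only if $F$ is a model of $\Psi'$.
   Context: For a set $V$ of variables, $[V]$ is the set of assignments $V\to\{\textsc{true},\textsc{false}\}$; assignments are identified with terms of the literals they make true, $\neg\sigma$ is the clause of the negations of these literals, and $\sigma|_W$ denotes restriction to (the part of the domain lying in) $W$. A DQBF is $\forall u_1\ldots\forall u_n\exists e_1(D_1)\ldots\exists e_m(D_m).\varphi$ with pairwise distinct variables, $U=\{u_i\}$, $E=\{e_j\}$, dependency sets $D(e_j)=D_j\subseteq U$, and $\varphi$ a CNF over $U\cup E$; a model is a family $F=(F_e)_{e}$ with $F_e:[D(e)]\to\{\textsc{true},\textsc{false}\}$ such that for every $\sigma\in[U]$, $\sigma\cup F(\sigma)$ satisfies the matrix, where $F(\sigma)$ assigns each existential $e$ the value $F_e(\sigma|_{D(e)})$. Arbiter variables are fresh variables $e^\sigma$ for $e\in E$, $\sigma\in[D(e)]$. For a set $A$ of them and a CNF $\psi$, $\mathcal{Q}\exists A(\emptyset).\psi$ is the DQBF whose prefix is that of $\Phi$ extended by every variable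 of $A$ as an existential variable with empty dependency set, and whose matrix is $\psi$. Forcing: let $\ell$ be a literal on a variable in $E$, $\psi$ a formula with $\mathit{var}(\psi)\subseteq U\cup E\cup A$, and $\sigma$ a partial assignment to $U\cup A$; $\ell$ is forced by $\sigma$ in $\psi$ if $\psi\wedge\sigma\wedge\neg\ell$ is unsatisfiable, and in that case $\neg(\sigma|_{D(\mathit{var}(\ell))\cup A})\vee\ell$ is called a forcing clause in $\psi$. *)

theory Defs
  imports Main
begin

text \<open>A literal is a pair (variable, polarity); True = positive literal.\<close>
type_synonym 'x lit = "'x \<times> bool"
type_synonym 'x clause = "'x lit set"
type_synonym 'x cnf = "'x clause set"
text \<open>Partial assignments; \<open>[V]\<close> is the set of those with domain exactly V.\<close>
type_synonym 'x assign = "'x \<rightharpoonup> bool"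

definition assignments :: "'x set \<Rightarrow> 'x assign set" where
  "assignments V = {\<sigma>. dom \<sigma> = V}"

definition is_cnf :: "'x cnf \<Rightarrow> bool" where
  "is_cnf \<psi> \<longleftrightarrow> finite \<psi> \<and> (\<forall>C\<in>\<psi>. finite C)"

definition vars_cnf :: "'x cnf \<Rightarrow> 'x set" where
  "vars_cnf \<psi> = {fst l | l C. C \<in> \<psi> \<and> l \<in> C}"

definition lit_sat :: "'x assign \<Rightarrow> 'x lit \<Rightarrow> bool" where
  "lit_sat \<tau> l \<longleftrightarrow> \<tau> (fst l) = Some (snd l)"

definition cnf_sat :: "'x assign \<Rightarrow> 'x cnf \<Rightarrow> bool" where
  "cnf_sat \<tau> \<psi> \<longleftrightarrow> (\<forall>C\<in>\<psi>. \<exists>l\<in>C. lit_sat \<tau> l)"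

definition neg_term :: "'x assign \<Rightarrow> 'x clause" where
  "neg_term \<sigma> = {(x, \<not> b) | x b. \<sigma> x = Some b}"

record 'x dqbf =
  univ :: "'x set"
  exi :: "'x set"
  dep :: "'x \<Rightarrow> 'x set"
  matrix :: "'x cnf"

definition wf_dqbf :: "'x dqbf \<Rightarrow> bool" where
  "wf_dqbf \<Phi> \<longleftrightarrow> finite (univ \<Phi>) \<and> finite (exi \<Phi>) \<and> univ \<Phi> \<inter> exi \<Phi> = {}
     \<and> (\<forall>e\<in>exi \<Phi>. dep \<Phi> e \<subseteq> univ \<Phi>) \<and> is_cnf (matrix \<Phi>)
     \<and> vars_cnf (matrix \<Phi>) \<subseteq> univ \<Phi> \<union> exi \<Phi>"

text \<open>A candidate model: a family \<open>F e\<close> of functions on assignments; only the values on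
  \<open>[D(e)]\<close> are ever used. \<open>F(\<sigma>)\<close> assigns every existential e the value \<open>F e (\<sigma>|D(e))\<close>.\<close>
definition F_apply :: "'x dqbf \<Rightarrow> ('x \<Rightarrow> 'x assign \<Rightarrow> bool) \<Rightarrow> 'x assign \<Rightarrow> 'x assign" where
  "F_apply \<Phi> F \<sigma> = (\<lambda>x. if x \<in> exi \<Phi> then Some (F x (\<sigma> |` dep \<Phi> x)) else None)"

definition is_model :: "'x dqbf \<Rightarrow> ('x \<Rightarrow> 'x assign \<Rightarrow> bool) \<Rightarrow> bool" where
  "is_model \<Phi> F \<longleftrightarrow> (\<forall>\<sigma>\<in>assignments (univ \<Phi>). cnf_sat (\<sigma> ++ F_apply \<Phi> F \<sigma>) (matrix \<Phi>))"

text \<open>Variables of the extended formula: original variables and arbiter variables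
  \<open>e\<^sup>\<sigma>\<close> (fresh by construction).\<close>
datatype 'v avar = Orig 'v | Arb 'v "'v assign"

definition arbiter_vars :: "'v dqbf \<Rightarrow> 'v avar set" where
  "arbiter_vars \<Phi> = {Arb e \<sigma> | e \<sigma>. e \<in> exi \<Phi> \<and> \<sigma> \<in> assignments (dep \<Phi> e)}"

text \<open>\<open>\<Q> \<exists>A(\<emptyset>). \<psi>\<close>: prefix of \<Phi> extended by the variables in A (empty dependency sets),
  with matrix \<psi>.\<close>
definition ext_dqbf :: "'v dqbf \<Rightarrow> 'v avar set \<Rightarrow> 'v avar cnf \<Rightarrow> 'v avar dqbf" where
  "ext_dqbf \<Phi> A \<psi> = \<lparr> univ = Orig ` univ \<Phi>, exi = Orig ` exi \<Phi> \<union> A,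
     dep = (\<lambda>x. case x of Orig v \<Rightarrow> Orig ` dep \<Phi> v | Arb _ _ \<Rightarrow> {}), matrix = \<psi> \<rparr>"

definition forced :: "'x cnf \<Rightarrow> 'x assign \<Rightarrow> 'x lit \<Rightarrow> bool" where
  "forced \<psi> \<sigma> l \<longleftrightarrow> \<not> (\<exists>\<tau> :: 'x \<Rightarrow> bool.
      cnf_sat (Some \<circ> \<tau>) \<psi> \<and> (\<forall>x b. \<sigma> x = Some b \<longrightarrow> \<tau> x = b) \<and> \<tau> (fst l) \<noteq> snd l)"

definition forcing_clause :: "'v dqbf \<Rightarrow> 'v avar set \<Rightarrow> 'v avar cnf \<Rightarrow> 'v avar assign \<Rightarrow> 'v avar lit \<Rightarrow> bool" where
  "forcing_clause \<Phi> A \<psi> p l \<longleftrightarrow> (\<exists>e \<sigma>. fst l = Orig e \<and> e \<in> exi \<Phi>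
      \<and> dom \<sigma> \<subseteq> Orig ` univ \<Phi> \<union> A \<and> forced \<psi> \<sigma> l
      \<and> p = \<sigma> |` (Orig ` dep \<Phi> e \<union> A))"

end

theory Submission
  imports Defs
begin

theorem lemma9:
  fixes \<Phi> :: "'v dqbf" and A :: "'v avar set" and \<psi> :: "'v avar cnf"
    and p :: "'v avar assign" and l :: "'v avar lit"
    and F :: "'v avar \<Rightarrow> 'v avar assign \<Rightarrow> bool"
  assumes "wf_dqbf \<Phi>"
    and "A \<subseteq> arbiter_vars \<Phi>"
    and "is_cnf \<psi>"
    and "vars_cnf \<psi> \<subseteq> Orig ` univ \<Phi> \<union> Orig ` exi \<Phi> \<union> A"
    and "forcing_clause \<Phi> A \<psi> p l"
  shows "is_model (ext_dqbf \<Phi> A \<psi>) F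
     \<longleftrightarrow> is_model (ext_dqbf \<Phi> A (\<psi> \<union> {neg_term p \<union> {l}})) F"
proof
  assume M2: "is_model (ext_dqbf \<Phi> A (\<psi> \<union> {neg_term p \<union> {l}})) F"
  have FA: "F_apply (ext_dqbf \<Phi> A (\<psi> \<union> {neg_term p \<union> {l}})) F = F_apply (ext_dqbf \<Phi> A \<psi>) F"
    unfolding F_apply_def ext_dqbf_def dqbf.select_convs by (rule refl)
  show "is_model (ext_dqbf \<Phi> A \<psi>) F"
    using M2 unfolding is_model_def FA unfolding cnf_sat_def by (simp add: ext_dqbf_def)
next
  assume M: "is_model (ext_dqbf \<Phi> A \<psi>) F"
  define \<Psi> where "\<Psi> = ext_dqbf \<Phi> A \<psi>"
  have FA: "F_apply (ext_dqbf \<Phi> A (\<psi> \<union> {neg_term p \<union> {l}})) F = F_apply \<Psi> F"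
    unfolding \<Psi>_def F_apply_def ext_dqbf_def dqbf.select_convs by (rule refl)
  have uP: "univ \<Psi> = Orig ` univ \<Phi>" and eP: "exi \<Psi> = Orig ` exi \<Phi> \<union> A"
    and dO: "\<And>v. dep \<Psi> (Orig v) = Orig ` dep \<Phi> v"
    and dA: "\<And>v s. dep \<Psi> (Arb v s) = {}" and mP: "matrix \<Psi> = \<psi>"
    unfolding \<Psi>_def ext_dqbf_def by simp_all
  have Aarb: "\<And>x. x \<in> A \<Longrightarrow> \<exists>v s. x = Arb v s"
    using assms(2) unfolding arbiter_vars_def by blast
  have disj: "univ \<Phi> \<inter> exi \<Phi> = {}" using assms(1) unfolding wf_dqbf_def by blast
  obtain e \<sigma>0 where l1: "fst l = Orig e" and eE: "e \<in> exi \<Phi>"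
    and d0: "dom \<sigma>0 \<subseteq> Orig ` univ \<Phi> \<union> A" and fo: "forced \<psi> \<sigma>0 l"
    and pdef: "p = \<sigma>0 |` (Orig ` dep \<Phi> e \<union> A)"
    using assms(5) unfolding forcing_clause_def by blast
  have Mm: "\<And>\<sigma>. \<sigma> \<in> assignments (Orig ` univ \<Phi>) \<Longrightarrow> cnf_sat (\<sigma> ++ F_apply \<Psi> F \<sigma>) \<psi>"
    using M unfolding is_model_def \<Psi>_def[symmetric] using uP mP by auto
  have onU: "\<And>\<sigma> x. x \<in> Orig ` univ \<Phi> \<Longrightarrow> (\<sigma> ++ F_apply \<Psi> F \<sigma>) x = \<sigma> x"
  proof -
    fix \<sigma> x assume "x \<in> Orig ` univ \<Phi>"
    then have "x \<notin> exi \<Psi>" using eP disj Aarb by auto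
    then show "(\<sigma> ++ F_apply \<Psi> F \<sigma>) x = \<sigma> x" unfolding F_apply_def map_add_def by simp
  qed
  have onE: "\<And>\<sigma> x. x \<in> exi \<Psi> \<Longrightarrow> (\<sigma> ++ F_apply \<Psi> F \<sigma>) x = Some (F x (\<sigma> |` dep \<Psi> x))"
    unfolding F_apply_def map_add_def by simp
  show "is_model (ext_dqbf \<Phi> A (\<psi> \<union> {neg_term p \<union> {l}})) F"
    unfolding is_model_def FA
  proof
    fix \<sigma> assume sa: "\<sigma> \<in> assignments (univ (ext_dqbf \<Phi> A (\<psi> \<union> {neg_term p \<union> {l}})))"
    then have sdom: "dom \<sigma> = Orig ` univ \<Phi>" unfolding assignments_def ext_dqbf_def by simp
    define \<tau> where "\<tau> = \<sigma> ++ F_apply \<Psi> F \<sigma>"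
    have s1: "cnf_sat \<tau> \<psi>" using Mm[of \<sigma>] sdom unfolding assignments_def \<tau>_def by simp
    have "\<exists>m\<in>neg_term p \<union> {l}. lit_sat \<tau> m"
    proof (rule ccontr)
      assume N: "\<not> ?thesis"
      have nl: "\<tau> (Orig e) \<noteq> Some (snd l)" using N l1 unfolding lit_sat_def by auto
      have agree: "\<And>x b. p x = Some b \<Longrightarrow> \<tau> x = Some b"
      proof -
        fix x b assume pb: "p x = Some b"
        then have xd: "x \<in> dom \<sigma>0" unfolding pdef by (auto simp: restrict_map_def split: if_splits)
        have "x \<in> dom \<tau>"
        proof (cases "x \<in> A")
          case True then show ?thesis using onE[of x \<sigma>] eP unfolding \<tau>_def by auto
        next
          case False then have "x \<in> Orig ` univ \<Phi>" using xd d0 by auto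
          then show ?thesis using onU[of x \<sigma>] sdom unfolding \<tau>_def by auto
        qed
        then obtain c where tc: "\<tau> x = Some c" by auto
        have "(x, \<not> b) \<in> neg_term p" using pb unfolding neg_term_def by auto
        then have "c \<noteq> (\<not> b)" using N tc unfolding lit_sat_def by auto
        then show "\<tau> x = Some b" using tc by auto
      qed
      define \<sigma>' where "\<sigma>' = (\<lambda>x. if x \<in> Orig ` univ \<Phi> \<and> x \<notin> Orig ` dep \<Phi> e \<and> \<sigma>0 x \<noteq> None
           then \<sigma>0 x else \<sigma> x)"
      have s'dom: "dom \<sigma>' = Orig ` univ \<Phi>"
      proof
        show "dom \<sigma>' \<subseteq> Orig ` univ \<Phi>" using sdom unfolding \<sigma>'_def by (auto split: if_splits)
        show "Orig ` univ \<Phi> \<subseteq> dom \<sigma>'"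
        proof
          fix x assume xu: "x \<in> Orig ` univ \<Phi>"
          then have "x \<in> dom \<sigma>" using sdom by simp
          then show "x \<in> dom \<sigma>'" unfolding \<sigma>'_def by (auto simp: dom_def)
        qed
      qed
      define \<tau>' where "\<tau>' = \<sigma>' ++ F_apply \<Psi> F \<sigma>'"
      have s2: "cnf_sat \<tau>' \<psi>" using Mm[of \<sigma>'] s'dom unfolding assignments_def \<tau>'_def by simp
      have rD: "\<sigma>' |` (Orig ` dep \<Phi> e) = \<sigma> |` (Orig ` dep \<Phi> e)"
        unfolding \<sigma>'_def restrict_map_def by (rule ext) auto
      have te: "\<tau>' (Orig e) = \<tau> (Orig e)"
        using onE[of "Orig e" \<sigma>'] onE[of "Orig e" \<sigma>] eP eE dO rD unfolding \<tau>'_def \<tau>_def by simp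
      have tA: "\<And>x. x \<in> A \<Longrightarrow> \<tau>' x = \<tau> x"
      proof -
        fix x assume xA: "x \<in> A"
        then obtain v s where "x = Arb v s" using Aarb by blast
        then show "\<tau>' x = \<tau> x" using onE[of x \<sigma>'] onE[of x \<sigma>] eP xA dA
          unfolding \<tau>'_def \<tau>_def by simp
      qed
      define t where "t = (\<lambda>x. case \<tau>' x of Some b \<Rightarrow> b | None \<Rightarrow> False)"
      have "cnf_sat (Some \<circ> t) \<psi>" unfolding cnf_sat_def
      proof
        fix C assume "C \<in> \<psi>"
        then obtain m where "m \<in> C" "\<tau>' (fst m) = Some (snd m)"
          using s2 unfolding cnf_sat_def lit_sat_def by blast
        then show "\<exists>m\<in>C. lit_sat (Some \<circ> t) m" unfolding lit_sat_def t_def by (intro bexI[of _ m]) auto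
      qed
      moreover have "\<forall>x b. \<sigma>0 x = Some b \<longrightarrow> t x = b"
      proof (intro allI impI)
        fix x b assume sb: "\<sigma>0 x = Some b"
        then have xd: "x \<in> Orig ` univ \<Phi> \<union> A" using d0 by auto
        have "\<tau>' x = Some b"
        proof (cases "x \<in> A")
          case True
          then have "p x = Some b" using sb unfolding pdef by simp
          then show ?thesis using tA[OF True] agree by simp
        next
          case False
          then have xU: "x \<in> Orig ` univ \<Phi>" using xd by auto
          show ?thesis
          proof (cases "x \<in> Orig ` dep \<Phi> e")
            case True
            then have "p x = Some b" using sb unfolding pdef by simp
            then have "\<tau> x = Some b" using agree by simp
            moreover have "\<sigma>' x = \<sigma> x" using True unfolding \<sigma>'_def by simp
            ultimately show ?thesis using onU[OF xU, of \<sigma>] onU[OF xU, of \<sigma>']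
              unfolding \<tau>_def \<tau>'_def by simp
          next
            case False
            then have "\<sigma>' x = \<sigma>0 x" using xU sb unfolding \<sigma>'_def by simp
            then show ?thesis using onU[OF xU, of \<sigma>'] sb
              unfolding \<tau>'_def by simp
          qed
        qed
        then show "t x = b" unfolding t_def by simp
      qed
      moreover have "t (fst l) \<noteq> snd l"
      proof -
        have "Orig e \<in> exi \<Psi>" using eP eE by auto
        then obtain c where "\<tau>' (Orig e) = Some c" using onE[of "Orig e" \<sigma>'] unfolding \<tau>'_def by auto
        then show ?thesis using te nl l1 unfolding t_def by auto
      qed
      ultimately show False using fo unfolding forced_def by blast
    qed
    then show "cnf_sat (\<sigma> ++ F_apply \<Psi> F \<sigma>) (matrix (ext_dqbf \<Phi> A (\<psi> \<union> {neg_term p \<union> {l}})))"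
      using s1 unfolding \<tau>_def cnf_sat_def ext_dqbf_def by simp
  qed
qed

end
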